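(* Let $n\ge 1$. Any two maximal Diophantine graphs of order $n$, $(G_1,f_1)$ and $(G_2,f_2)$ with Diophantine labelings $f_1,f_2$, are labeling isomorphic: there is a graph isomorphism $\varphi:V(G_1)\to V(G_2)$ with $f_1=f_2\circ\varphi$.
   Context: A graph $G$ with $n$ vertices is Diophantine if there is a bijection $f:V(G)\to\{1,2,\dots,n\}$ (a Diophantine labeling) such that $\gcd(f(u),f(v))$ divides $n$ for every edge $uv$. A maximal Diophantine graph of order $n$ is a Diophantine graph with $n$ vertices such that adding any new edge yields a graph that is not Diophantine. *)

theory Defs
  imports Main
begin

definition simple_graph :: "'a set \<Rightarrow> ('a \<Rightarrow> 'a \<Rightarrow> bool) \<Rightarrow> bool" where
  "simple_graph V E \<longleftrightarrow> finite V \<and>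
     (\<forall>u v. E u v \<longrightarrow> u \<in> V \<and> v \<in> V) \<and>
     (\<forall>u v. E u v \<longrightarrow> E v u) \<and> (\<forall>u. \<not> E u u)"

definition diophantine_labeling :: "'a set \<Rightarrow> ('a \<Rightarrow> 'a \<Rightarrow> bool) \<Rightarrow> ('a \<Rightarrow> nat) \<Rightarrow> bool" where
  "diophantine_labeling V E f \<longleftrightarrow>
     bij_betw f V {1..card V} \<and>
     (\<forall>u v. E u v \<longrightarrow> gcd (f u) (f v) dvd card V)"

definition diophantine :: "'a set \<Rightarrow> ('a \<Rightarrow> 'a \<Rightarrow> bool) \<Rightarrow> bool" where
  "diophantine V E \<longleftrightarrow> (\<exists>f. diophantine_labeling V E f)"

definition add_edge :: "('a \<Rightarrow> 'a \<Rightarrow> bool) \<Rightarrow> 'a \<Rightarrow> 'a \<Rightarrow> ('a \<Rightarrow> 'a \<Rightarrow> bool)" where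
  "add_edge E u v = (\<lambda>x y. E x y \<or> (x = u \<and> y = v) \<or> (x = v \<and> y = u))"

definition maximal_diophantine :: "nat \<Rightarrow> 'a set \<Rightarrow> ('a \<Rightarrow> 'a \<Rightarrow> bool) \<Rightarrow> bool" where
  "maximal_diophantine n V E \<longleftrightarrow>
     simple_graph V E \<and> card V = n \<and> diophantine V E \<and>
     (\<forall>u\<in>V. \<forall>v\<in>V. u \<noteq> v \<and> \<not> E u v \<longrightarrow> \<not> diophantine V (add_edge E u v))"

end

theory Submission
  imports Defs
begin

lemma edge_char:
  assumes m: "maximal_diophantine n V E" and l: "diophantine_labeling V E f"
    and u: "u \<in> V" and v: "v \<in> V"
  shows "E u v \<longleftrightarrow> u \<noteq> v \<and> gcd (f u) (f v) dvd n"
proof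
  assume e: "E u v"
  from m have "simple_graph V E" "card V = n" by (auto simp: maximal_diophantine_def)
  with e l show "u \<noteq> v \<and> gcd (f u) (f v) dvd n"
    by (auto simp: simple_graph_def diophantine_labeling_def)
next
  assume h: "u \<noteq> v \<and> gcd (f u) (f v) dvd n"
  show "E u v"
  proof (rule ccontr)
    assume ne: "\<not> E u v"
    from m have cv: "card V = n" by (auto simp: maximal_diophantine_def)
    have "diophantine_labeling V (add_edge E u v) f"
      using l h cv unfolding diophantine_labeling_def add_edge_def
      by (auto simp: gcd.commute)
    hence "diophantine V (add_edge E u v)" by (auto simp: diophantine_def)
    with m u v h ne show False by (auto simp: maximal_diophantine_def)
  qed
qed

theorem mainTheorem2:
  fixes V1 :: "'a set" and E1 :: "'a \<Rightarrow> 'a \<Rightarrow> bool" and f1 :: "'a \<Rightarrow> nat"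
    and V2 :: "'b set" and E2 :: "'b \<Rightarrow> 'b \<Rightarrow> bool" and f2 :: "'b \<Rightarrow> nat"
    and n :: nat
  assumes "n \<ge> 1"
    and "maximal_diophantine n V1 E1" and "diophantine_labeling V1 E1 f1"
    and "maximal_diophantine n V2 E2" and "diophantine_labeling V2 E2 f2"
  shows "\<exists>\<phi>. bij_betw \<phi> V1 V2 \<and>
           (\<forall>u\<in>V1. \<forall>v\<in>V1. E1 u v \<longleftrightarrow> E2 (\<phi> u) (\<phi> v)) \<and>
           (\<forall>v\<in>V1. f1 v = f2 (\<phi> v))"
proof -
  have c1: "card V1 = n" and c2: "card V2 = n"
    using assms(2,4) by (auto simp: maximal_diophantine_def)
  have b1: "bij_betw f1 V1 {1..n}" using assms(3) c1 by (simp add: diophantine_labeling_def)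
  have b2: "bij_betw f2 V2 {1..n}" using assms(5) c2 by (simp add: diophantine_labeling_def)
  define g where "g = the_inv_into V2 f2"
  have bg: "bij_betw g {1..n} V2" using b2 unfolding g_def by (rule bij_betw_the_inv_into)
  define \<phi> where "\<phi> = g \<circ> f1"
  have bp: "bij_betw \<phi> V1 V2" unfolding \<phi>_def using b1 bg by (rule bij_betw_trans)
  have fp: "\<forall>v\<in>V1. f1 v = f2 (\<phi> v)"
  proof
    fix v assume "v \<in> V1"
    hence "f1 v \<in> {1..n}" using b1 by (auto simp: bij_betw_def)
    thus "f1 v = f2 (\<phi> v)" unfolding \<phi>_def g_def using b2
      by (simp add: bij_betw_def f_the_inv_into_f)
  qed
  have "\<forall>u\<in>V1. \<forall>v\<in>V1. E1 u v \<longleftrightarrow> E2 (\<phi> u) (\<phi> v)"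
  proof (intro ballI)
    fix u v assume u: "u \<in> V1" and v: "v \<in> V1"
    have pu: "\<phi> u \<in> V2" and pv: "\<phi> v \<in> V2" using bp u v by (auto simp: bij_betw_def)
    have "(u \<noteq> v) = (\<phi> u \<noteq> \<phi> v)" using bp u v by (auto simp: bij_betw_def inj_on_def)
    thus "E1 u v \<longleftrightarrow> E2 (\<phi> u) (\<phi> v)"
      using edge_char[OF assms(2,3) u v] edge_char[OF assms(4,5) pu pv] fp u v by simp
  qed
  with bp fp show ?thesis by blast
qed

end
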